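(* Let $G$ be a compact abelian group with discrete dual group $\Gamma$, let $N \in \mathbb{N}$ and $E \subset \Gamma$. If $E$ is independent and $\mathbb{Z}_N \subset \operatorname{range}(\gamma)$ for all $\gamma \in E$, then $E$ is $N$-PR.
   Context: Characters are written multiplicatively; $\mathbb{Z}_N$ is identified with the $N$-th roots of unity in the unit circle $\mathbb{T}$, and $\operatorname{range}(\gamma) = \gamma(G)$. A set $E$ of characters is independent if whenever $\gamma_1,\dots,\gamma_k \in E$ are distinct, $m_i \in \mathbb{Z}$ and $\prod_i \gamma_i^{m_i} = 1$, then $\gamma_i^{m_i} = 1$ for all $i$. A subset $E \subset \Gamma$ is $N$-PR if for every function $\varphi: E \to \mathbb{Z}_N$ there exists $x \in G$ with $\varphi(\gamma) = \gamma(x)$ for all $\gamma \in E$. *)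

theory Defs
  imports "HOL-Analysis.Analysis"
begin

definition character :: "('g::{topological_group_add, ab_group_add} \<Rightarrow> complex) \<Rightarrow> bool" where
  "character \<gamma> \<longleftrightarrow> continuous_on UNIV \<gamma> \<and> (\<forall>x y. \<gamma> (x + y) = \<gamma> x * \<gamma> y)
      \<and> (\<forall>x. norm (\<gamma> x) = 1)"

definition independent_chars :: "('g::{topological_group_add, ab_group_add} \<Rightarrow> complex) set \<Rightarrow> bool" where
  "independent_chars E \<longleftrightarrow>
     (\<forall>F m. finite F \<and> F \<subseteq> E \<and> (\<forall>x. (\<Prod>\<gamma>\<in>F. (\<gamma> x) powi (m \<gamma>)) = 1)
        \<longrightarrow> (\<forall>\<gamma>\<in>F. \<forall>x. (\<gamma> x) powi (m \<gamma>) = 1))"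

text \<open>Z_N identified with the N-th roots of unity.\<close>
definition roots_unity :: "nat \<Rightarrow> complex set" where
  "roots_unity N = {z. z ^ N = 1}"

definition N_PR :: "nat \<Rightarrow> ('g::{topological_group_add, ab_group_add} \<Rightarrow> complex) set \<Rightarrow> bool" where
  "N_PR N E \<longleftrightarrow> (\<forall>\<phi>. (\<forall>\<gamma>\<in>E. \<phi> \<gamma> \<in> roots_unity N) \<longrightarrow> (\<exists>x. \<forall>\<gamma>\<in>E. \<phi> \<gamma> = \<gamma> x))"

end

theory Submission
  imports Defs
begin


lemma subgrp_int_mult:
  fixes L :: "real set"
  assumes add: "\<And>x y. x \<in> L \<Longrightarrow> y \<in> L \<Longrightarrow> x + y \<in> L"
    and neg: "\<And>x. x \<in> L \<Longrightarrow> - x \<in> L" and z: "0 \<in> L" and t: "t \<in> L"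
  shows "of_int k * t \<in> L"
proof -
  have n: "of_nat n * t \<in> L" for n :: nat
    by (induction n) (auto simp: distrib_right intro: add t z)
  show ?thesis
  proof (cases "k \<ge> 0")
    case True
    then show ?thesis using n[of "nat k"] by simp
  next
    case False
    then show ?thesis using neg[OF n[of "nat (-k)"]] by simp
  qed
qed

lemma real_subgroup_dichotomy:
  fixes L :: "real set"
  assumes cl: "closed L"
    and add: "\<And>x y. x \<in> L \<Longrightarrow> y \<in> L \<Longrightarrow> x + y \<in> L"
    and neg: "\<And>x. x \<in> L \<Longrightarrow> - x \<in> L" and z: "0 \<in> L" and p: "p \<in> L" "p > 0"
  shows "L = UNIV \<or> (\<exists>c>0. c \<in> L \<and> (\<forall>t\<in>L. \<exists>k::int. t = of_int k * c))"
proof (cases "\<forall>e>0. \<exists>t\<in>L. 0 < t \<and> t < e")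
  case True
  have "r \<in> L" for r
  proof -
    have "\<forall>e>0. \<exists>y\<in>L. dist y r < e"
    proof (intro allI impI)
      fix e :: real assume "e > 0"
      then obtain t where t: "t \<in> L" "0 < t" "t < e" using True by blast
      define k where "k = floor (r / t)"
      have "of_int k * t \<in> L" by (rule subgrp_int_mult[OF add neg z t(1)])
      moreover have "of_int k \<le> r / t" "r / t < of_int k + 1" unfolding k_def by linarith+
      then have "of_int k * t \<le> r" "r < of_int k * t + t" using t(2)
        by (auto simp: field_simps)
      then have "dist (of_int k * t) r < e" using t by (simp add: dist_real_def)
      ultimately show "\<exists>y\<in>L. dist y r < e" by blast
    qed
    then show ?thesis using closed_approachable[OF cl] by blast
  qed
  then show ?thesis by blast
next
  case False
  then obtain e where e: "e > 0" "\<And>t. t \<in> L \<Longrightarrow> \<not> (0 < t \<and> t < e)" by blast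
  define P where "P = L \<inter> {e..}"
  have Pcl: "closed P" unfolding P_def by (intro closed_Int cl closed_atLeast)
  have pP: "p \<in> P" using e(2)[OF p(1)] p unfolding P_def by auto
  have bdd: "bdd_below P" unfolding P_def by (rule bdd_belowI[of _ e]) auto
  define c where "c = Inf P"
  have cP: "c \<in> P" unfolding c_def using closed_contains_Inf[OF _ bdd Pcl] pP by blast
  then have c: "c \<in> L" "c \<ge> e" unfolding P_def by auto
  have "\<exists>k::int. t = of_int k * c" if t: "t \<in> L" for t
  proof -
    define k where "k = floor (t / c)"
    have "of_int (-k) * c \<in> L" by (rule subgrp_int_mult[OF add neg z c(1)])
    then have r: "t - of_int k * c \<in> L" using add[OF t] by (metis diff_conv_add_uminus mult_minus_left of_int_minus)
    have "of_int k \<le> t / c" "t / c < of_int k + 1" unfolding k_def by linarith+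
    then have r1: "of_int k * c \<le> t" "t < of_int k * c + c" using c e by (auto simp: field_simps)
    have "t - of_int k * c = 0"
    proof (rule ccontr)
      assume "t - of_int k * c \<noteq> 0"
      then have "t - of_int k * c > 0" using r1 by simp
      then have "t - of_int k * c \<ge> e" using e(2)[OF r] by linarith
      then have "t - of_int k * c \<in> P" using r unfolding P_def by auto
      then have "c \<le> t - of_int k * c" unfolding c_def by (rule cInf_lower[OF _ bdd])
      then show False using r1 by simp
    qed
    then show ?thesis by auto
  qed
  then have "\<exists>c>0. c \<in> L \<and> (\<forall>t\<in>L. \<exists>k::int. t = of_int k * c)" using c e by (intro exI[of _ c]) auto
  then show ?thesis by blast
qed



lemma additive_cont_linear:
  fixes u :: "real \<Rightarrow> complex"
  assumes cont: "continuous_on UNIV u" and add: "\<And>s t. u (s + t) = u s + u t"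
  shows "u t = of_real t * u 1"
proof -
  define v where "v t = u t - of_real t * u 1" for t
  have vadd: "v (s + t) = v s + v t" for s t unfolding v_def by (simp add: add algebra_simps)
  have v0: "v 0 = 0" using vadd[of 0 0] by simp
  have vneg: "v (- s) = - v s" for s using vadd[of s "-s"] v0 by (simp add: eq_neg_iff_add_eq_0 add.commute)
  have vhalf: "v (s / 2) = v s / 2" for s using vadd[of "s/2" "s/2"] by simp
  have vcont: "continuous_on UNIV v" unfolding v_def by (intro continuous_intros cont)
  define K where "K = {t. v t = 0}"
  have Kcl: "closed K" unfolding K_def using closed_Collect_eq[OF vcont continuous_on_const] .
  have Kd: "L = UNIV \<or> (\<exists>c>0. c \<in> L \<and> (\<forall>t\<in>L. \<exists>k::int. t = of_int k * c))" if "L = K" for L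
    unfolding that
    by (rule real_subgroup_dichotomy[OF Kcl, of 1]) (auto simp: K_def vadd vneg v0, simp add: v_def)
  have "K = UNIV"
  proof (rule ccontr)
    assume "K \<noteq> UNIV"
    then obtain c where c: "c > 0" "c \<in> K" "\<forall>t\<in>K. \<exists>k::int. t = of_int k * c" using Kd by blast
    have "c / 2 \<in> K" using c(2) vhalf[of c] by (simp add: K_def)
    then obtain k :: int where k: "c / 2 = of_int k * c" using c(3) by blast
    then have "of_int k = (1/2::real)" using c(1) by (simp add: field_simps)
    then have "of_int (2 * k) = (1::real)" by simp
    then have "2 * k = 1" by linarith
    then show False by presburger
  qed
  then have "v t = 0" unfolding K_def by blast
  then show ?thesis unfolding v_def by simp
qed

lemma circle_hom_real:
  fixes f :: "real \<Rightarrow> complex"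
  assumes cont: "continuous_on UNIV f" and mult: "\<And>s t. f (s + t) = f s * f t"
    and nz: "\<And>t. f t \<noteq> 0" and per: "f (2 * pi) = 1"
  shows "\<exists>a::int. \<forall>t. f t = cis (of_int a * t)"
proof -
  obtain g where gc: "continuous_on UNIV g" and fg0: "\<And>x. x \<in> UNIV \<Longrightarrow> f x = exp (g x)"
    using continuous_logarithm_on_simply_connected[OF cont
        convex_imp_simply_connected[OF convex_UNIV] locally_path_connected_UNIV] nz by blast
  have fg: "f x = exp (g x)" for x using fg0 by simp
  have e1: "\<exists>n::int. z = of_int n * (2 * pi * \<i>)" if "exp z = 1" for z
  proof -
    from that obtain n :: int where "Re z = 0" "Im z = of_int (2 * n) * pi" using exp_eq_1 by blast
    then show ?thesis by (intro exI[of _ n]) (simp add: complex_eq_iff)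
  qed
  have gadd: "g (s + t) = g s + g t - g 0" for s t
  proof -
    define d where "d t = g (s + t) - g s - g t" for t
    have dexp: "exp (d t) = 1" for t
      using mult[of s t] nz[of s] nz[of t] unfolding d_def fg by (simp add: exp_diff)
    have dc: "continuous_on UNIV d" unfolding d_def
      by (intro continuous_intros continuous_on_compose2[OF gc]) auto
    have "d constant_on UNIV"
    proof (rule continuous_discrete_range_constant[OF connected_UNIV dc])
      fix x :: real
      show "\<exists>e>0. \<forall>y. y \<in> UNIV \<and> d y \<noteq> d x \<longrightarrow> e \<le> norm (d y - d x)"
      proof (intro exI[of _ "2 * pi"] conjI allI impI)
        fix y assume "y \<in> UNIV \<and> d y \<noteq> d x"
        obtain n :: int where n: "d y = of_int n * (2 * pi * \<i>)" using e1 dexp by blast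
        obtain m :: int where m: "d x = of_int m * (2 * pi * \<i>)" using e1 dexp by blast
        have "n \<noteq> m" using \<open>y \<in> UNIV \<and> d y \<noteq> d x\<close> n m by auto
        then have "1 \<le> \<bar>of_int (n - m) :: real\<bar>" by linarith
        moreover have "d y - d x = complex_of_real (of_int (n - m) * (2 * pi)) * \<i>"
          unfolding n m by (simp add: algebra_simps)
        then have "norm (d y - d x) = \<bar>of_int (n - m)\<bar> * (2 * pi)"
          by (simp only: norm_mult norm_of_real) (simp add: abs_mult)
        ultimately show "2 * pi \<le> norm (d y - d x)" by simp
      qed simp
    qed
    then have dt: "d t = d 0" unfolding constant_on_def by (metis UNIV_I)
    have d0: "d 0 = - g 0" unfolding d_def by simp
    have gd: "g (s + t) = g s + g t + d t" unfolding d_def by simp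
    show ?thesis unfolding gd dt d0 by simp
  qed
  define u where "u t = g t - g 0" for t
  have uadd: "u (s + t) = u s + u t" for s t unfolding u_def using gadd[of s t] by simp
  have uc: "continuous_on UNIV u" unfolding u_def by (intro continuous_intros gc)
  have ulin: "u t = of_real t * u 1" for t by (rule additive_cont_linear[OF uc uadd])
  have f0: "f 0 = 1" using mult[of 0 0] nz[of 0] by simp
  have fu: "f t = exp (u t)" for t using f0 fg[of 0] fg[of t] unfolding u_def by (simp add: exp_diff)
  have "exp (of_real (2 * pi) * u 1) = 1" using per fu[of "2*pi"] ulin[of "2*pi"] by simp
  then obtain a :: int where a: "of_real (2 * pi) * u 1 = of_int a * (2 * pi * \<i>)" using e1 by blast
  then have u1: "u 1 = of_int a * \<i>" by (simp add: field_simps)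
  show ?thesis
  proof (intro exI allI)
    fix t
    have "u t = of_real t * (of_int a * \<i>)" using ulin[of t] u1 by simp
    then show "f t = cis (of_int a * t)" unfolding fu by (simp add: cis_conv_exp mult_ac)
  qed
qed


lemma cis_eq_fun: "cis = (\<lambda>t. exp (\<i> * complex_of_real t))"
  by (rule ext) (simp add: cis_conv_exp)

lemma continuous_on_cis': "continuous_on A cis"
  unfolding cis_eq_fun by (intro continuous_intros)

lemma unit_cis_Arg: "norm z = 1 \<Longrightarrow> cis (Arg z) = z"
  using rcis_cmod_Arg[of z] by (simp add: rcis_def)

lemma cis_eq_1_int: "cis t = 1 \<Longrightarrow> \<exists>j::int. t = of_int j * (2 * pi)"
proof -
  assume "cis t = 1"
  then have "exp (\<i> * complex_of_real t) = 1" by (simp add: cis_conv_exp)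
  then obtain n :: int where "t = of_int (2 * n) * pi" using exp_eq_1 by auto
  then show ?thesis by (intro exI[of _ n]) simp
qed

lemma circle_subgroup_char:
  fixes S :: "complex set" and \<psi> :: "complex \<Rightarrow> complex"
  assumes cS: "compact S" and S1: "1 \<in> S" and Smul: "\<And>x y. x \<in> S \<Longrightarrow> y \<in> S \<Longrightarrow> x * y \<in> S"
    and Sinv: "\<And>x. x \<in> S \<Longrightarrow> inverse x \<in> S" and Snorm: "\<And>x. x \<in> S \<Longrightarrow> norm x = 1"
    and pc: "continuous_on S \<psi>" and pm: "\<And>x y. x \<in> S \<Longrightarrow> y \<in> S \<Longrightarrow> \<psi> (x * y) = \<psi> x * \<psi> y"
    and pn: "\<And>x. x \<in> S \<Longrightarrow> norm (\<psi> x) = 1"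
  shows "\<exists>a::int. \<forall>s\<in>S. \<psi> s = s powi a"
proof -
  have pnz: "\<psi> x \<noteq> 0" if "x \<in> S" for x using pn[OF that] by auto
  have p1: "\<psi> 1 = 1" using pm[OF S1 S1] pnz[OF S1] by simp
  have pinv: "\<psi> (inverse x) = inverse (\<psi> x)" if x: "x \<in> S" for x
  proof -
    have "x \<noteq> 0" using Snorm[OF x] by auto
    then have "\<psi> x * \<psi> (inverse x) = 1" using pm[OF x Sinv[OF x]] p1 by simp
    then show ?thesis by (simp add: field_simps pnz[OF x])
  qed
  have Spow: "x ^ n \<in> S \<and> \<psi> (x ^ n) = \<psi> x ^ n" if x: "x \<in> S" for x n
    by (induction n) (auto simp: S1 p1 Smul pm x)
  have Spowi: "x powi m \<in> S \<and> \<psi> (x powi m) = \<psi> x powi m" if x: "x \<in> S" for x m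
  proof (cases "m \<ge> 0")
    case True
    then show ?thesis using Spow[OF x, of "nat m"] by (simp add: power_int_def)
  next
    case False
    define n where "n = nat (- m)"
    have n: "m = - int n" using False unfolding n_def by simp
    then show ?thesis using Spow[OF x, of n] Sinv pinv by (simp add: power_int_minus)
  qed
  define L where "L = cis -` S"
  have Lcl: "closed L" unfolding L_def
    by (rule continuous_closed_vimage[OF compact_imp_closed[OF cS]])
       (simp add: cis_eq_fun continuous_intros)
  have Ladd: "x \<in> L \<Longrightarrow> y \<in> L \<Longrightarrow> x + y \<in> L" for x y
    unfolding L_def using Smul by (auto simp flip: cis_mult)
  have Lneg: "x \<in> L \<Longrightarrow> - x \<in> L" for x
    unfolding L_def using Sinv by (metis cis_inverse vimage_eq)
  have L0: "0 \<in> L" unfolding L_def using S1 by simp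
  have L2: "2 * pi \<in> L" unfolding L_def using S1 by simp
  have Arg_L: "Arg s \<in> L" "cis (Arg s) = s" if "s \<in> S" for s
    using unit_cis_Arg[OF Snorm[OF that]] that unfolding L_def by auto
  from real_subgroup_dichotomy[OF Lcl Ladd Lneg L0 L2]
  consider "L = UNIV" | c where "c > 0" "c \<in> L" "\<forall>t\<in>L. \<exists>k::int. t = of_int k * c"
    using pi_gt_zero by fastforce
  then show ?thesis
  proof cases
    case 1
    then have cS: "cis t \<in> S" for t unfolding L_def by auto
    define f where "f t = \<psi> (cis t)" for t
    have fc: "continuous_on UNIV f" unfolding f_def
      by (rule continuous_on_compose2[OF pc continuous_on_cis']) (auto simp: cS)
    have fm: "f (s + t) = f s * f t" for s t unfolding f_def using pm[OF cS cS] by (simp flip: cis_mult)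
    have fnz: "f t \<noteq> 0" for t unfolding f_def using pnz[OF cS] .
    have fp: "f (2 * pi) = 1" unfolding f_def using p1 by simp
    obtain a :: int where a: "\<And>t. f t = cis (of_int a * t)" using circle_hom_real[OF fc fm fnz fp] by blast
    show ?thesis
    proof (intro exI ballI)
      fix s assume s: "s \<in> S"
      have "\<psi> s = f (Arg s)" unfolding f_def using Arg_L[OF s] by simp
      also have "\<dots> = cis (Arg s) powi a" by (simp add: a cis_power_int)
      finally show "\<psi> s = s powi a" using Arg_L[OF s] by simp
    qed
  next
    case 2
    note c = 2
    obtain k :: int where k: "2 * pi = of_int k * c" using c(3) L2 by blast
    have kpos: "k > 0" proof (rule ccontr)
      assume "\<not> k > 0"
      then have "of_int k * c \<le> 0" using c(1) by (simp add: mult_nonpos_nonneg)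
      then show False using k pi_gt_zero by linarith
    qed
    have ccS: "cis c \<in> S" using c(2) unfolding L_def by simp
    define w where "w = \<psi> (cis c)"
    have "w powi k = \<psi> (cis c powi k)" unfolding w_def using Spowi[OF ccS] by simp
    also have "\<dots> = 1" using p1 by (simp add: cis_power_int flip: k)
    finally have wk: "w powi k = 1" .
    have wn: "norm w = 1" unfolding w_def using pn[OF ccS] .
    define \<theta> where "\<theta> = Arg w"
    have wt: "w = cis \<theta>" unfolding \<theta>_def using unit_cis_Arg[OF wn] by simp
    have "cis (of_int k * \<theta>) = 1" using wk by (simp add: wt cis_power_int)
    then obtain j :: int where j: "of_int k * \<theta> = of_int j * (2 * pi)" using cis_eq_1_int by blast
    have "\<theta> = of_int j * c" using j kpos unfolding k by (simp add: field_simps)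
    then have wj: "w = cis c powi j" by (simp add: wt cis_power_int mult.commute)
    show ?thesis
    proof (intro exI ballI)
      fix s assume s: "s \<in> S"
      obtain m :: int where m: "Arg s = of_int m * c" using c(3) Arg_L[OF s] by blast
      have sm: "s = cis c powi m" using Arg_L(2)[OF s] by (simp add: m cis_power_int)
      have "\<psi> s = w powi m" unfolding sm w_def using Spowi[OF ccS] by simp
      also have "\<dots> = s powi j" unfolding wj sm by (simp flip: power_int_mult add: mult.commute)
      finally show "\<psi> s = s powi j" .
    qed
  qed
qed


lemma circle_subgroup_cases:
  fixes S :: "complex set"
  assumes cS: "compact S" and S1: "1 \<in> S" and Smul: "\<And>x y. x \<in> S \<Longrightarrow> y \<in> S \<Longrightarrow> x * y \<in> S"
    and Sinv: "\<And>x. x \<in> S \<Longrightarrow> inverse x \<in> S" and Snorm: "\<And>x. x \<in> S \<Longrightarrow> norm x = 1"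
  shows "(\<forall>z. norm z = 1 \<longrightarrow> z \<in> S) \<or>
         (\<exists>k::int. k > 0 \<and> (\<forall>s\<in>S. s powi k = 1) \<and> (\<forall>z. z powi k = 1 \<longrightarrow> z \<in> S))"
proof -
  define L where "L = cis -` S"
  have Lcl: "closed L" unfolding L_def
    by (rule continuous_closed_vimage[OF compact_imp_closed[OF cS]])
       (simp add: cis_eq_fun continuous_intros)
  have Ladd: "x \<in> L \<Longrightarrow> y \<in> L \<Longrightarrow> x + y \<in> L" for x y
    unfolding L_def using Smul by (auto simp flip: cis_mult)
  have Lneg: "x \<in> L \<Longrightarrow> - x \<in> L" for x
    unfolding L_def using Sinv by (metis cis_inverse vimage_eq)
  have L0: "0 \<in> L" unfolding L_def using S1 by simp
  have L2: "2 * pi \<in> L" unfolding L_def using S1 by simp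
  have Arg_L: "Arg s \<in> L" "cis (Arg s) = s" if "s \<in> S" for s
    using unit_cis_Arg[OF Snorm[OF that]] that unfolding L_def by auto
  from real_subgroup_dichotomy[OF Lcl Ladd Lneg L0 L2]
  consider "L = UNIV" | c where "c > 0" "c \<in> L" "\<forall>t\<in>L. \<exists>k::int. t = of_int k * c"
    using pi_gt_zero by fastforce
  then show ?thesis
  proof cases
    case 1
    then have "z \<in> S" if "norm z = 1" for z
      using unit_cis_Arg[OF that] unfolding L_def by (metis UNIV_I vimageD)
    then show ?thesis by blast
  next
    case 2
    note c = 2
    obtain k :: int where k: "2 * pi = of_int k * c" using c(3) L2 by blast
    have kpos: "k > 0"
    proof (rule ccontr)
      assume "\<not> k > 0"
      then have "of_int k * c \<le> 0" using c(1) by (simp add: mult_nonpos_nonneg)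
      then show False using k pi_gt_zero by linarith
    qed
    have A: "s powi k = 1" if s: "s \<in> S" for s
    proof -
      obtain m :: int where m: "Arg s = of_int m * c" using c(3) Arg_L[OF s] by blast
      have "s powi k = cis (of_int k * (of_int m * c))" using Arg_L(2)[OF s] m
        by (metis cis_power_int)
      also have "\<dots> = cis (2 * pi * of_int m)"
        using k by (metis mult.assoc mult.commute)
      also have "\<dots> = 1" by (rule cis_multiple_2pi) simp
      finally show ?thesis .
    qed
    have B: "z \<in> S" if z: "z powi k = 1" for z
    proof -
      have "norm z powi k = 1" using z by (metis norm_one norm_power_int)
      then have "norm z ^ nat k = 1" using kpos by (simp add: power_int_def)
      then have "norm z ^ nat k = 1 ^ nat k" by simp
      then have zn: "norm z = 1" using kpos power_eq_imp_eq_base[of "norm z" "nat k" 1] by simp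
      define \<theta> where "\<theta> = Arg z"
      have zt: "z = cis \<theta>" unfolding \<theta>_def using unit_cis_Arg[OF zn] by simp
      have "cis (of_int k * \<theta>) = 1" using z by (simp add: zt cis_power_int)
      then obtain j :: int where j: "of_int k * \<theta> = of_int j * (2 * pi)" using cis_eq_1_int by blast
      have "\<theta> = of_int j * c" using j kpos unfolding k by (simp add: field_simps)
      then have "\<theta> \<in> L" using subgrp_int_mult[OF Ladd Lneg L0 c(2)] by simp
      then show ?thesis unfolding L_def zt by simp
    qed
    show ?thesis using kpos A B by blast
  qed
qed


lemma char_facts:
  fixes \<gamma> :: "'g::{topological_group_add, ab_group_add} \<Rightarrow> complex"
  assumes "character \<gamma>"
  shows "\<gamma> x \<noteq> 0" "\<gamma> 0 = 1" "\<gamma> (- x) = inverse (\<gamma> x)" "\<gamma> (x + y) = \<gamma> x * \<gamma> y"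
    "\<gamma> (x - y) = \<gamma> x / \<gamma> y" "norm (\<gamma> x) = 1" "continuous_on UNIV \<gamma>"
proof -
  have m: "\<gamma> (x + y) = \<gamma> x * \<gamma> y" "norm (\<gamma> x) = 1" "continuous_on UNIV \<gamma>" for x y
    using assms unfolding character_def by auto
  have nz: "\<gamma> x \<noteq> 0" for x using m(2)[of x] by auto
  have z: "\<gamma> 0 = 1" using m(1)[of 0 0] nz[of 0] by simp
  have i: "\<gamma> (- x) = inverse (\<gamma> x)" for x
    using m(1)[of x "-x"] z nz[of x] by (simp add: field_simps)
  show "\<gamma> x \<noteq> 0" "\<gamma> 0 = 1" "\<gamma> (- x) = inverse (\<gamma> x)" "\<gamma> (x + y) = \<gamma> x * \<gamma> y"
    "norm (\<gamma> x) = 1" "continuous_on UNIV \<gamma>" using nz z i m by auto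
  show "\<gamma> (x - y) = \<gamma> x / \<gamma> y" using m(1)[of x "-y"] i[of y] by (simp add: divide_inverse)
qed

lemma character_mult_powi:
  fixes ch \<beta> :: "'g::{topological_group_add, ab_group_add} \<Rightarrow> complex"
  assumes "character ch" "character \<beta>"
  shows "character (\<lambda>x. ch x * \<beta> x powi a)"
proof -
  note c = char_facts[OF assms(1)] and b = char_facts[OF assms(2)]
  have "continuous_on UNIV (\<lambda>x. ch x * \<beta> x powi a)"
    by (intro continuous_intros c(7) b(7)) (simp add: b(1))
  then show ?thesis unfolding character_def
    by (simp add: c(4) b(4) power_int_mult_distrib norm_mult norm_power_int c(6) b(6))
qed

lemma ext_step:
  fixes L :: "'g::{topological_group_add, ab_group_add, t2_space} set" and \<beta> ch :: "'g \<Rightarrow> complex"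
  assumes cU: "compact (UNIV :: 'g set)" and Lcl: "closed L" and L0: "0 \<in> L"
    and Ladd: "\<And>x y. x \<in> L \<Longrightarrow> y \<in> L \<Longrightarrow> x + y \<in> L" and Lneg: "\<And>x. x \<in> L \<Longrightarrow> - x \<in> L"
    and cb: "character \<beta>" and cc: "character ch"
    and triv: "\<And>x. x \<in> L \<Longrightarrow> \<beta> x = 1 \<Longrightarrow> ch x = 1"
  shows "\<exists>a::int. \<forall>x\<in>L. ch x = \<beta> x powi a"
proof -
  note b = char_facts[OF cb] and c = char_facts[OF cc]
  define S where "S = \<beta> ` L"
  define \<psi> where "\<psi> s = ch (SOME x. x \<in> L \<and> \<beta> x = s)" for s
  have psi: "\<psi> (\<beta> x) = ch x" if x: "x \<in> L" for x
  proof -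
    define y where "y = (SOME y. y \<in> L \<and> \<beta> y = \<beta> x)"
    have y: "y \<in> L" "\<beta> y = \<beta> x" unfolding y_def by (rule someI2[of _ x], use x in auto)+
    have "y - x \<in> L" using Ladd[OF y(1) Lneg[OF x]] by simp
    moreover have "\<beta> (y - x) = 1" using b(5)[of y x] y(2) b(1)[of x] by simp
    ultimately have "ch (y - x) = 1" by (rule triv)
    then have "ch y = ch x" using c(5)[of y x] c(1)[of x] by (simp add: divide_eq_1_iff)
    then show ?thesis unfolding \<psi>_def y_def[symmetric] .
  qed
  have cL: "compact L" using compact_Int_closed[OF cU Lcl] by simp
  have cS: "compact S" unfolding S_def
    by (rule compact_continuous_image[OF continuous_on_subset[OF b(7)] cL]) simp
  have graph: "(\<lambda>s. (s, \<psi> s)) ` S = (\<lambda>x. (\<beta> x, ch x)) ` L"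
    unfolding S_def by (auto simp: image_image psi intro!: image_cong)
  have "compact ((\<lambda>x. (\<beta> x, ch x)) ` L)"
    by (rule compact_continuous_image[OF _ cL])
       (intro continuous_on_Pair continuous_on_subset[OF b(7)] continuous_on_subset[OF c(7)]; simp)
  then have gcl: "closed ((\<lambda>s. (s, \<psi> s)) ` S)" unfolding graph by (rule compact_imp_closed)
  have pcont: "continuous_on S \<psi>"
    by (rule continuous_from_closed_graph[OF compact_sphere[of 0 1] _ gcl])
       (auto simp: S_def psi c(6))
  have "\<exists>a::int. \<forall>s\<in>S. \<psi> s = s powi a"
  proof (rule circle_subgroup_char[OF cS _ _ _ _ pcont])
    show "1 \<in> S" unfolding S_def using L0 b(2) by force
    show "x * y \<in> S" if "x \<in> S" "y \<in> S" for x y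
      using that Ladd unfolding S_def by (auto simp flip: b(4))
    show "inverse x \<in> S" if "x \<in> S" for x
      using that Lneg unfolding S_def by (auto simp flip: b(3))
    show "norm x = 1" if "x \<in> S" for x using that unfolding S_def by (auto simp: b(6))
    show "\<psi> (x * y) = \<psi> x * \<psi> y" if "x \<in> S" "y \<in> S" for x y
      using that Ladd unfolding S_def by (auto simp: psi c(4) simp flip: b(4))
    show "norm (\<psi> x) = 1" if "x \<in> S" for x using that unfolding S_def by (auto simp: psi c(6))
  qed
  then obtain a :: int where a: "\<forall>s\<in>S. \<psi> s = s powi a" by blast
  show ?thesis
  proof (intro exI ballI)
    fix x assume x: "x \<in> L"
    then show "ch x = \<beta> x powi a" using a psi[OF x] unfolding S_def by auto
  qed
qed



lemma kernel_subgroup: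
  fixes F :: "('g::{topological_group_add, ab_group_add, t2_space} \<Rightarrow> complex) set"
  assumes ch: "\<forall>\<gamma>\<in>F. character \<gamma>" and fin: "finite F"
  defines "L \<equiv> {x. \<forall>\<gamma>\<in>F. \<gamma> x = 1}"
  shows "closed L" "0 \<in> L" "\<And>x y. x \<in> L \<Longrightarrow> y \<in> L \<Longrightarrow> x + y \<in> L" "\<And>x. x \<in> L \<Longrightarrow> - x \<in> L"
proof -
  have "L = (\<Inter>\<gamma>\<in>F. {x. \<gamma> x = 1})" unfolding L_def by auto
  moreover have "closed {x. \<gamma> x = 1}" if "\<gamma> \<in> F" for \<gamma>
    using closed_Collect_eq[OF char_facts(7)[of \<gamma>] continuous_on_const] ch that by blast
  ultimately show "closed L" by (simp add: closed_INT)
  show "0 \<in> L" unfolding L_def using ch char_facts(2) by blast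
  show "x + y \<in> L" if "x \<in> L" "y \<in> L" for x y using that ch char_facts(4) unfolding L_def by fastforce
  show "- x \<in> L" if "x \<in> L" for x using that ch char_facts(3) unfolding L_def by fastforce
qed

lemma ext_chars:
  fixes F :: "('g::{topological_group_add, ab_group_add, t2_space} \<Rightarrow> complex) set"
  assumes cU: "compact (UNIV :: 'g set)" and fin: "finite F"
  shows "\<forall>\<gamma>\<in>F. character \<gamma> \<Longrightarrow> character ch \<Longrightarrow> (\<And>x. (\<forall>\<gamma>\<in>F. \<gamma> x = 1) \<Longrightarrow> ch x = 1)
     \<Longrightarrow> \<exists>m. \<forall>x. ch x = (\<Prod>\<gamma>\<in>F. \<gamma> x powi m \<gamma>)"
  using fin
proof (induction F arbitrary: ch rule: finite_induct)
  case empty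
  then show ?case by simp
next
  case (insert \<beta> F)
  have chF: "\<forall>\<gamma>\<in>F. character \<gamma>" and cb: "character \<beta>" using insert.prems(1) by auto
  define L where "L = {x. \<forall>\<gamma>\<in>F. \<gamma> x = 1}"
  note Lp = kernel_subgroup[OF chF insert.hyps(1), folded L_def]
  obtain a :: int where a: "\<forall>x\<in>L. ch x = \<beta> x powi a"
    using ext_step[OF cU Lp cb insert.prems(2)] insert.prems(3) unfolding L_def by auto
  define ch' where "ch' x = ch x * \<beta> x powi (- a)" for x
  have cch': "character ch'" unfolding ch'_def by (rule character_mult_powi[OF insert.prems(2) cb])
  have "ch' x = 1" if "\<forall>\<gamma>\<in>F. \<gamma> x = 1" for x
  proof -
    have "x \<in> L" using that unfolding L_def by simp
    then show ?thesis using a char_facts(1)[OF cb, of x] unfolding ch'_def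
      by (simp add: power_int_minus)
  qed
  then obtain m where m: "\<forall>x. ch' x = (\<Prod>\<gamma>\<in>F. \<gamma> x powi m \<gamma>)" using insert.IH[OF chF cch'] by blast
  show ?case
  proof (intro exI allI)
    fix x
    have pe: "(\<Prod>\<gamma>\<in>F. \<gamma> x powi (m(\<beta> := a)) \<gamma>) = (\<Prod>\<gamma>\<in>F. \<gamma> x powi m \<gamma>)"
      using insert.hyps(2) by (intro prod.cong) auto
    have "ch x = ch' x * \<beta> x powi a" unfolding ch'_def using char_facts(1)[OF cb, of x]
      by (simp add: power_int_minus)
    then show "ch x = (\<Prod>\<gamma>\<in>insert \<beta> F. \<gamma> x powi (m(\<beta> := a)) \<gamma>)"
      using insert.hyps m pe by (simp add: mult.commute)
  qed
qed

lemma reach_finite: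
  fixes E :: "('g::{topological_group_add, ab_group_add, t2_space} \<Rightarrow> complex) set"
  assumes cU: "compact (UNIV :: 'g set)" and chE: "\<forall>\<gamma>\<in>E. character \<gamma>"
    and ind: "independent_chars E" and fin: "finite F"
  shows "F \<subseteq> E \<Longrightarrow> (\<forall>\<gamma>\<in>F. t \<gamma> \<in> range \<gamma>) \<Longrightarrow> \<exists>x. \<forall>\<gamma>\<in>F. \<gamma> x = t \<gamma>"
  using fin
proof (induction F rule: finite_induct)
  case empty
  then show ?case by simp
next
  case (insert \<beta> F)
  have chF: "\<forall>\<gamma>\<in>F. character \<gamma>" and cb: "character \<beta>" using insert.prems(1) chE by auto
  note b = char_facts[OF cb]
  obtain x0 where x0: "\<forall>\<gamma>\<in>F. \<gamma> x0 = t \<gamma>" using insert.IH insert.prems by auto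
  obtain x1 where x1: "t \<beta> = \<beta> x1" using insert.prems(2) by auto
  define z where "z = t \<beta> / \<beta> x0"
  define L where "L = {x. \<forall>\<gamma>\<in>F. \<gamma> x = 1}"
  note Lp = kernel_subgroup[OF chF insert.hyps(1), folded L_def]
  define S where "S = \<beta> ` L"
  have cL: "compact L" using compact_Int_closed[OF cU Lp(1)] by simp
  have cS: "compact S" unfolding S_def
    by (rule compact_continuous_image[OF continuous_on_subset[OF b(7)] cL]) simp
  have "z \<in> S"
  proof -
    have cases: "(\<forall>z. norm z = 1 \<longrightarrow> z \<in> S) \<or>
         (\<exists>k::int. k > 0 \<and> (\<forall>s\<in>S. s powi k = 1) \<and> (\<forall>z. z powi k = 1 \<longrightarrow> z \<in> S))"
    proof (rule circle_subgroup_cases[OF cS])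
      show "1 \<in> S" unfolding S_def using Lp(2) b(2) by force
      show "x * y \<in> S" if "x \<in> S" "y \<in> S" for x y
        using that Lp(3) unfolding S_def by (auto simp flip: b(4))
      show "inverse x \<in> S" if "x \<in> S" for x
        using that Lp(4) unfolding S_def by (auto simp flip: b(3))
      show "norm x = 1" if "x \<in> S" for x using that unfolding S_def by (auto simp: b(6))
    qed
    then show ?thesis
    proof
      assume "\<forall>z. norm z = 1 \<longrightarrow> z \<in> S"
      moreover have "norm z = 1" unfolding z_def x1 by (simp add: norm_divide b(6))
      ultimately show ?thesis by blast
    next
      assume "\<exists>k::int. k > 0 \<and> (\<forall>s\<in>S. s powi k = 1) \<and> (\<forall>z. z powi k = 1 \<longrightarrow> z \<in> S)"
      then obtain k :: int where k: "k > 0" "\<forall>s\<in>S. s powi k = 1" "\<forall>z. z powi k = 1 \<longrightarrow> z \<in> S"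
        by blast
      have cbk: "character (\<lambda>x. \<beta> x powi k)"
        using character_mult_powi[of "\<lambda>x. 1" \<beta> k] cb by (simp add: character_def)
      have "\<beta> x powi k = 1" if "\<forall>\<gamma>\<in>F. \<gamma> x = 1" for x
        using k(2) that unfolding S_def L_def by auto
      then obtain m where m: "\<forall>x. \<beta> x powi k = (\<Prod>\<gamma>\<in>F. \<gamma> x powi m \<gamma>)"
        using ext_chars[OF cU insert.hyps(1) chF cbk] by blast
      define m' where "m' = (\<lambda>\<gamma>. - m \<gamma>)(\<beta> := k)"
      have "(\<Prod>\<gamma>\<in>insert \<beta> F. \<gamma> x powi m' \<gamma>) = 1" for x
      proof -
        have pe: "(\<Prod>\<gamma>\<in>F. \<gamma> x powi m' \<gamma>) = (\<Prod>\<gamma>\<in>F. inverse (\<gamma> x powi m \<gamma>))"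
          using insert.hyps(2) unfolding m'_def by (intro prod.cong) (auto simp: power_int_minus)
        have nz: "(\<Prod>\<gamma>\<in>F. \<gamma> x powi m \<gamma>) \<noteq> 0" using m b(1)[of x] by (metis power_int_eq_0_iff)
        have "(\<Prod>\<gamma>\<in>F. inverse (\<gamma> x powi m \<gamma>)) = inverse (\<Prod>\<gamma>\<in>F. \<gamma> x powi m \<gamma>)"
          using prod_inversef[of "\<lambda>\<gamma>. \<gamma> x powi m \<gamma>" F] by (simp add: o_def)
        then show ?thesis using insert.hyps pe m nz unfolding m'_def
          by simp
      qed
      then have "\<forall>\<gamma>\<in>insert \<beta> F. \<forall>x. \<gamma> x powi m' \<gamma> = 1"
        using ind insert.prems(1) insert.hyps(1) unfolding independent_chars_def by blast
      then have bk: "\<beta> x powi k = 1" for x unfolding m'_def by auto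
      have "z powi k = 1" unfolding z_def x1 using bk by (simp add: power_int_divide_distrib)
      then show ?thesis using k(3) by blast
    qed
  qed
  then obtain y where y: "y \<in> L" "\<beta> y = z" unfolding S_def by blast
  show ?case
  proof (intro exI ballI)
    fix \<gamma> assume g: "\<gamma> \<in> insert \<beta> F"
    show "\<gamma> (x0 + y) = t \<gamma>"
    proof (cases "\<gamma> = \<beta>")
      case True
      then show ?thesis using y b(4) b(1)[of x0] unfolding z_def by simp
    next
      case False
      then have "\<gamma> \<in> F" using g by simp
      then show ?thesis using y x0 chF char_facts(4) unfolding L_def by fastforce
    qed
  qed
qed

theorem corollary2p3:
  fixes E :: "('g::{topological_group_add, ab_group_add, t2_space} \<Rightarrow> complex) set"
    and N :: nat
  assumes "compact (UNIV :: 'g set)"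
    and "\<forall>\<gamma>\<in>E. character \<gamma>"
    and "independent_chars E"
    and "\<forall>\<gamma>\<in>E. roots_unity N \<subseteq> range \<gamma>"
  shows "N_PR N E"
  unfolding N_PR_def
proof (intro allI impI)
  fix \<phi> :: "('g \<Rightarrow> complex) \<Rightarrow> complex"
  assume ph: "\<forall>\<gamma>\<in>E. \<phi> \<gamma> \<in> roots_unity N"
  define C where "C \<gamma> = {x. \<gamma> x = \<phi> \<gamma>}" for \<gamma>
  have "UNIV \<inter> \<Inter>(C ` E) \<noteq> {}"
  proof (rule compact_imp_fip[OF assms(1)])
    show "closed T" if "T \<in> C ` E" for T
      using that assms(2) char_facts(7) unfolding C_def
      by (auto intro!: closed_Collect_eq continuous_on_const)
    show "UNIV \<inter> \<Inter>F' \<noteq> {}" if F'h: "finite F'" "F' \<subseteq> C ` E" for F'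
    proof -
      obtain E' where E': "E' \<subseteq> E" "finite E'" "F' = C ` E'"
        using finite_subset_image[OF F'h] by blast
      obtain x where "\<forall>\<gamma>\<in>E'. \<gamma> x = \<phi> \<gamma>"
        using reach_finite[OF assms(1) assms(2) assms(3) E'(2) E'(1), of \<phi>] ph assms(4) E'(1) by blast
      then have "x \<in> \<Inter>F'" unfolding E'(3) C_def by auto
      then show ?thesis by blast
    qed
  qed
  then show "\<exists>x. \<forall>\<gamma>\<in>E. \<phi> \<gamma> = \<gamma> x" unfolding C_def by auto
qed

end
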